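(* Let $\mathbb{F}$ be a field and $\mathcal{H}=(Q_0,Q_1,\beta)$ a directed tensor-labeled hypergraph. Then $$\dim_{\mathbb{F}}\mathcal{Z}(\mathcal{H})=|Q_1|-|V_{\mathrm{macro}}|+c_{\mathrm{macro}}+\delta(\mathcal{H}).$$
   Context: $Q_0,Q_1$ are finite sets (vertices, hyperedges). $T(\mathbb{F}^{Q_0})=\bigoplus_{k\ge0}(\mathbb{F}^{Q_0})^{\otimes k}$ is the tensor algebra. A directed tensor-labeled hypergraph is $\mathcal{H}=(Q_0,Q_1,\beta)$ with $\beta:\mathbb{F}^{Q_1}\to T(\mathbb{F}^{Q_0})\times T(\mathbb{F}^{Q_0})$ linear; write $\beta(\mathbf{1}_e)=(A_e,B_e)$ (source and target tensors). The tensor incidence map $\partial_\beta:\mathbb{F}^{Q_1}\to T(\mathbb{F}^{Q_0})$ is linear with $\partial_\beta(\mathbf{1}_e)=B_e-A_e$, and $\mathcal{Z}(\mathcal{H}):=\mathrm{Ker}(\partial_\beta)$. $V_{\mathrm{macro}}:=\{A_e\}_{e\in Q_1}\cup\{B_e\}_{e\in Q_1}\subset T(\mathbb{F}^{Q_0})$ (as a set). The macrograph $\mathcal{H}_{\mathrm{macro}}$ is the directed multigraph with vertex set $V_{\mathrm{macro}}$, edge set $Q_1$, source $e\mapsto A_e$, target $e\mapsto B_e$; $c_{\mathrm{macro}}$ is its number of weakly connected components and $B_{\mathrm{macro}}:\mathbb{F}^{Q_1}\to\mathbb{F}^{V_{\mathrm{macro}}}$ its incidence map $\mathbf{1}_e\mapsto\mathbf{1}_{B_e}-\mathbf{1}_{A_e}$.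 The evaluation map $\hat\phi:\mathbb{F}^{V_{\mathrm{macro}}}\to T(\mathbb{F}^{Q_0})$ is linear with $\mathbf{1}_w\mapsto w$. The defect invariant is $\delta(\mathcal{H}):=\dim_{\mathbb{F}}(\mathrm{Im}(B_{\mathrm{macro}})\cap\mathrm{Ker}(\hat\phi))$. *)

theory Defs
  imports Complex_Main "HOL-Library.Function_Algebras"
begin

text \<open>Vector spaces of the form F^X are represented as functions X-type to the field
  with pointwise operations; scalar multiplication is fscale.\<close>

definition fscale :: "'a::field \<Rightarrow> ('b \<Rightarrow> 'a) \<Rightarrow> ('b \<Rightarrow> 'a)" where
  "fscale c f = (\<lambda>x. c * f x)"

definition fdim :: "('b \<Rightarrow> 'a::field) set \<Rightarrow> nat" where
  "fdim S = vector_space.dim (fscale :: 'a \<Rightarrow> ('b \<Rightarrow> 'a) \<Rightarrow> ('b \<Rightarrow> 'a)) S"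

definition unitv :: "'b \<Rightarrow> ('b \<Rightarrow> 'a::field)" where
  "unitv x = (\<lambda>y. if y = x then 1 else 0)"

definition fspace :: "'b set \<Rightarrow> ('b \<Rightarrow> 'a::zero) set" where
  "fspace X = {f. \<forall>x. x \<notin> X \<longrightarrow> f x = 0}"

text \<open>The tensor algebra T(F^{Q0}) = direct sum over k of (F^{Q0})^{\<otimes>k}, represented via its
  standard basis of words (lists) over Q0: finitely supported functions on words over Q0.
  The word w = [q1,...,qk] corresponds to the basis tensor 1_{q1} \<otimes> ... \<otimes> 1_{qk}.\<close>
definition tensor_alg :: "'v set \<Rightarrow> ('v list \<Rightarrow> 'a::zero) set" where
  "tensor_alg Q0 = {t. finite {w. t w \<noteq> 0} \<and> (\<forall>w. t w \<noteq> 0 \<longrightarrow> set w \<subseteq> Q0)}"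

text \<open>A directed tensor-labeled hypergraph (Q0,Q1,beta), beta(1_e) = (A e, B e).\<close>
definition tensor_hypergraph ::
  "'v set \<Rightarrow> 'e set \<Rightarrow> ('e \<Rightarrow> 'v list \<Rightarrow> 'a::field) \<Rightarrow> ('e \<Rightarrow> 'v list \<Rightarrow> 'a) \<Rightarrow> bool" where
  "tensor_hypergraph Q0 Q1 A B \<longleftrightarrow> finite Q0 \<and> finite Q1 \<and>
     (\<forall>e\<in>Q1. A e \<in> tensor_alg Q0 \<and> B e \<in> tensor_alg Q0)"

definition tensor_incidence ::
  "'e set \<Rightarrow> ('e \<Rightarrow> 'v list \<Rightarrow> 'a::field) \<Rightarrow> ('e \<Rightarrow> 'v list \<Rightarrow> 'a) \<Rightarrow> ('e \<Rightarrow> 'a) \<Rightarrow> ('v list \<Rightarrow> 'a)" where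
  "tensor_incidence Q1 A B f = (\<Sum>e\<in>Q1. fscale (f e) (B e - A e))"

definition cycle_space ::
  "'e set \<Rightarrow> ('e \<Rightarrow> 'v list \<Rightarrow> 'a::field) \<Rightarrow> ('e \<Rightarrow> 'v list \<Rightarrow> 'a) \<Rightarrow> ('e \<Rightarrow> 'a) set" where
  "cycle_space Q1 A B = {f \<in> fspace Q1. tensor_incidence Q1 A B f = 0}"

definition V_macro :: "'e set \<Rightarrow> ('e \<Rightarrow> 't) \<Rightarrow> ('e \<Rightarrow> 't) \<Rightarrow> 't set" where
  "V_macro Q1 A B = A ` Q1 \<union> B ` Q1"

definition c_macro :: "'e set \<Rightarrow> ('e \<Rightarrow> 't) \<Rightarrow> ('e \<Rightarrow> 't) \<Rightarrow> nat" where
  "c_macro Q1 A B =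
     card (V_macro Q1 A B //
       ((\<lambda>e. (A e, B e)) ` Q1 \<union> (\<lambda>e. (B e, A e)) ` Q1)\<^sup>*)"

definition B_macro :: "'e set \<Rightarrow> ('e \<Rightarrow> 't) \<Rightarrow> ('e \<Rightarrow> 't) \<Rightarrow> ('e \<Rightarrow> 'a::field) \<Rightarrow> ('t \<Rightarrow> 'a)" where
  "B_macro Q1 A B f = (\<Sum>e\<in>Q1. fscale (f e) (unitv (B e) - unitv (A e)))"

definition eval_macro :: "'e set \<Rightarrow> ('e \<Rightarrow> 'v list \<Rightarrow> 'a::field) \<Rightarrow> ('e \<Rightarrow> 'v list \<Rightarrow> 'a)
    \<Rightarrow> (('v list \<Rightarrow> 'a) \<Rightarrow> 'a) \<Rightarrow> ('v list \<Rightarrow> 'a)" where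
  "eval_macro Q1 A B g = (\<Sum>w\<in>V_macro Q1 A B. fscale (g w) w)"

definition defect :: "'e set \<Rightarrow> ('e \<Rightarrow> 'v list \<Rightarrow> 'a::field) \<Rightarrow> ('e \<Rightarrow> 'v list \<Rightarrow> 'a) \<Rightarrow> nat" where
  "defect Q1 A B =
     fdim (B_macro Q1 A B ` fspace Q1 \<inter>
           {g \<in> fspace (V_macro Q1 A B). eval_macro Q1 A B g = 0})"

end

theory Submission imports Defs begin

lemma (in vector_space_pair) rank_nullity_sub:
  assumes lf: "Vector_Spaces.linear s1 s2 f" and S: "vs1.subspace S" and fin: "finite T" "S \<subseteq> vs1.span T"
  shows "vs1.dim S = vs2.dim (f ` S) + vs1.dim {x\<in>S. f x = 0}"
proof -
  let ?N = "{x\<in>S. f x = 0}"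
  obtain K where K: "K \<subseteq> ?N" "vs1.independent K" "?N \<subseteq> vs1.span K"
    using vs1.maximal_independent_subset[of ?N] by blast
  obtain B where B: "K \<subseteq> B" "B \<subseteq> S" "vs1.independent B" "S \<subseteq> vs1.span B"
    using vs1.maximal_independent_subset_extend[of K S] K by auto
  have finB: "finite B" using vs1.independent_span_bound[OF fin(1) B(3)] B(2) fin(2) by auto
  have finK: "finite K" using finB B(1) finite_subset by auto
  have dS: "vs1.dim S = card B" using vs1.basis_card_eq_dim B by auto
  have dN: "vs1.dim ?N = card K" using vs1.basis_card_eq_dim K by auto
  have spanB: "vs1.span B = S" using vs1.span_minimal[OF B(2) S] B(4) by auto
  have img0: "f ` S = vs2.span (f ` B)" using linear_span_image[OF lf, of B] spanB by simp
  have "vs2.span (f ` B) = vs2.span (f ` (B - K))"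
  proof (rule antisym)
    show "vs2.span (f ` B) \<subseteq> vs2.span (f ` (B - K))"
    proof (rule vs2.span_minimal[OF _ vs2.subspace_span])
      show "f ` B \<subseteq> vs2.span (f ` (B - K))"
      proof
        fix y assume "y \<in> f ` B"
        then obtain b where b: "b \<in> B" "y = f b" by auto
        show "y \<in> vs2.span (f ` (B - K))"
        proof (cases "b \<in> K")
          case True then have "y = 0" using K(1) b by auto
          then show ?thesis by (simp add: vs2.span_zero)
        next
          case False then show ?thesis using b by (auto intro: vs2.span_base)
        qed
      qed
    qed
    show "vs2.span (f ` (B - K)) \<subseteq> vs2.span (f ` B)"
      by (rule vs2.span_mono) auto
  qed
  with img0 have img: "f ` S = vs2.span (f ` (B - K))" by simp
  have disj: "x = 0" if x: "x \<in> vs1.span (B - K)" "f x = 0" for x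
  proof -
    have xS: "x \<in> S" using x(1) vs1.span_mono[of "B - K" B] spanB by auto
    then have xK: "x \<in> vs1.span K" using x(2) K(3) by auto
    have r1: "vs1.representation B x = vs1.representation K x"
      using vs1.representation_extend[OF B(3) xK B(1)] .
    have r2: "vs1.representation B x = vs1.representation (B - K) x"
      using vs1.representation_extend[OF B(3) x(1)] by auto
    have r0: "vs1.representation B x b = 0" for b
      using vs1.representation_ne_zero[of K x b] vs1.representation_ne_zero[of "B - K" x b] r1 r2
      by auto
    have "x = (\<Sum>b | vs1.representation B x b \<noteq> 0. vs1.representation B x b *a b)"
      using vs1.sum_nonzero_representation_eq[OF B(3)] xS B(4) by auto
    also have "\<dots> = 0" using r0 by simp
    finally show ?thesis .
  qed
  have inj: "inj_on f (vs1.span (B - K))"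
    using linear_inj_on_iff_eq_0[OF lf vs1.subspace_span] disj by blast
  have ind: "vs2.independent (f ` (B - K))"
    using linear_independent_injective_image[OF lf _ inj] vs1.independent_mono[OF B(3)] by auto
  have "vs2.dim (f ` S) = card (f ` (B - K))"
    using img vs2.dim_span_eq_card_independent[OF ind] by simp
  also have "\<dots> = card (B - K)"
    using card_image inj_on_subset[OF inj vs1.span_superset] by blast
  also have "\<dots> = card B - card K" using card_Diff_subset[OF finK B(1)] .
  finally show ?thesis using dS dN card_mono[OF finB B(1)] by simp
qed


interpretation fs: vector_space "fscale :: 'a::field \<Rightarrow> ('b \<Rightarrow> 'a) \<Rightarrow> ('b \<Rightarrow> 'a)"
  by unfold_locales (auto simp: fscale_def fun_eq_iff algebra_simps)

interpretation fsp: vector_space_pair "fscale :: 'a::field \<Rightarrow> ('b \<Rightarrow> 'a) \<Rightarrow> ('b \<Rightarrow> 'a)"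
   "fscale :: 'a::field \<Rightarrow> ('c \<Rightarrow> 'a) \<Rightarrow> ('c \<Rightarrow> 'a)"
  by unfold_locales

lemma fdim_fs: "fdim S = fs.dim S"
  by (simp add: fdim_def)

lemma sum_fun_app: "(\<Sum>i\<in>I. F i) x = (\<Sum>i\<in>I. F i x)"
  by (induction I rule: infinite_finite_induct) auto

lemma fscale_app[simp]: "fscale c f x = c * f x"
  by (simp add: fscale_def)

lemma unitv_app: "unitv y x = (if x = y then 1 else 0)"
  by (simp add: unitv_def)

lemma unitv_eq_iff[simp]: "(unitv x = (unitv y :: 'b \<Rightarrow> 'a::field)) \<longleftrightarrow> x = y"
  by (auto simp: unitv_def fun_eq_iff)

lemma linear_fsI:
  assumes "\<And>x y. f (x + y) = f x + f y" "\<And>c x. f (fscale c x) = fscale c (f x)"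
  shows "Vector_Spaces.linear (fscale :: 'a::field \<Rightarrow> _) fscale f"
  unfolding Vector_Spaces.linear_iff by (intro conjI allI assms fs.vector_space_axioms)

lemma fspace_subspace: "fs.subspace (fspace X)"
  by (auto simp: fs.subspace_def fspace_def)

lemma unitv_independent: "fs.independent (unitv ` X :: ('b \<Rightarrow> 'a::field) set)"
  unfolding fs.independent_explicit_finite_subsets
proof (intro allI impI ballI)
  fix S u v
  assume S: "S \<subseteq> (unitv ` X :: ('b \<Rightarrow> 'a::field) set)" "finite S"
    and eq: "(\<Sum>v\<in>S. fscale (u v) v) = 0" and v: "v \<in> S"
  obtain x where x: "v = unitv x" using v S by auto
  have "0 = (\<Sum>v\<in>S. fscale (u v) v) x" using eq by simp
  also have "\<dots> = (\<Sum>w\<in>S. u w * (if w = v then 1 else 0))"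
    unfolding sum_fun_app
  proof (rule sum.cong[OF refl])
    fix w assume "w \<in> S"
    then obtain y where "w = unitv y" using S by auto
    then show "fscale (u w) w x = u w * (if w = v then 1 else 0)"
      using x by (auto simp: unitv_app)
  qed
  also have "\<dots> = u v" using v S(2) by (simp add: if_distrib sum.delta cong: if_cong)
  finally show "u v = 0" by simp
qed

lemma fspace_expand:
  assumes "finite X" "f \<in> fspace X"
  shows "f = (\<Sum>x\<in>X. fscale (f x) (unitv x))"
proof
  fix y
  have "(\<Sum>x\<in>X. fscale (f x) (unitv x)) y = (\<Sum>x\<in>X. if y = x then f x else 0)"
    unfolding sum_fun_app by (rule sum.cong) (auto simp: unitv_app)
  also have "\<dots> = f y" using assms by (auto simp: fspace_def)
  finally show "f y = (\<Sum>x\<in>X. fscale (f x) (unitv x)) y" by simp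
qed

lemma span_unitv:
  assumes "finite X"
  shows "fs.span (unitv ` X) = (fspace X :: ('b \<Rightarrow> 'a::field) set)"
proof
  show "fs.span (unitv ` X) \<subseteq> (fspace X :: ('b \<Rightarrow> 'a::field) set)"
    by (rule fs.span_minimal[OF _ fspace_subspace]) (auto simp: fspace_def unitv_def)
  show "(fspace X :: ('b \<Rightarrow> 'a::field) set) \<subseteq> fs.span (unitv ` X)"
  proof
    fix f :: "'b \<Rightarrow> 'a" assume "f \<in> fspace X"
    then have "f = (\<Sum>x\<in>X. fscale (f x) (unitv x))" using fspace_expand assms by blast
    also have "\<dots> \<in> fs.span (unitv ` X)"
      by (intro fs.span_sum fs.span_scale fs.span_base) auto
    finally show "f \<in> fs.span (unitv ` X)" .
  qed
qed

lemma dim_fspace: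
  assumes "finite X"
  shows "fs.dim (fspace X :: ('b \<Rightarrow> 'a::field) set) = card X"
proof -
  have "fs.dim (fspace X :: ('b \<Rightarrow> 'a::field) set) = fs.dim (fs.span (unitv ` X) :: ('b \<Rightarrow> 'a::field) set)"
    using span_unitv[OF assms] fs.dim_span by metis
  also have "\<dots> = card (unitv ` X :: ('b \<Rightarrow> 'a::field) set)"
    by (rule fs.dim_span_eq_card_independent[OF unitv_independent])
  also have "\<dots> = card X" by (rule card_image) (auto simp: inj_on_def)
  finally show ?thesis .
qed


context
  fixes Q1 :: "'e set" and A B :: "'e \<Rightarrow> 'v list \<Rightarrow> 'a::field"
  assumes finQ1: "finite Q1"
begin

abbreviation "VV \<equiv> V_macro Q1 A B"
abbreviation LL :: "('e \<Rightarrow> 'a) \<Rightarrow> ('v list \<Rightarrow> 'a) \<Rightarrow> 'a" where "LL \<equiv> B_macro Q1 A B"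
abbreviation "PH \<equiv> eval_macro Q1 A B"
abbreviation "EE \<equiv> (\<lambda>e. (A e, B e)) ` Q1 \<union> (\<lambda>e. (B e, A e)) ` Q1"
abbreviation "RR \<equiv> EE\<^sup>*"

lemma finV: "finite VV" using finQ1 by (simp add: V_macro_def)

lemma AB_in_V: "e \<in> Q1 \<Longrightarrow> A e \<in> VV" "e \<in> Q1 \<Longrightarrow> B e \<in> VV"
  by (auto simp: V_macro_def)

lemma LL_app: "LL f w = (\<Sum>e\<in>Q1. f e * (unitv (B e) w - unitv (A e) w))"
  by (simp add: B_macro_def sum_fun_app)

lemma PH_app: "PH g x = (\<Sum>w\<in>VV. g w * w x)"
  by (simp add: eval_macro_def sum_fun_app)

lemma LL_lin: "Vector_Spaces.linear fscale fscale LL"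
  by (rule linear_fsI) (auto simp: fun_eq_iff LL_app distrib_right sum.distrib sum_distrib_left mult.assoc)

lemma PH_lin: "Vector_Spaces.linear fscale fscale PH"
  by (rule linear_fsI) (auto simp: fun_eq_iff PH_app distrib_right sum.distrib sum_distrib_left mult.assoc)

lemma LL_fspace: "LL f \<in> fspace VV"
  unfolding fspace_def mem_Collect_eq
proof (intro allI impI)
  fix w assume "w \<notin> VV"
  then show "LL f w = 0" unfolding LL_app using AB_in_V
    by (intro sum.neutral ballI) (metis unitv_app diff_self mult_zero_right)
qed

lemma LL_unitv: "e \<in> Q1 \<Longrightarrow> LL (unitv e) = unitv (B e) - unitv (A e)"
  by (rule ext) (simp add: LL_app unitv_app[of e] finQ1 if_distrib[of "\<lambda>c. c * _"] cong: if_cong)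

lemma PH_unitv: "w \<in> VV \<Longrightarrow> PH (unitv w) = w"
  by (rule ext) (simp add: PH_app unitv_app[of w] finV if_distrib[of "\<lambda>c. c * _"] cong: if_cong)

lemma incidence_eq: "tensor_incidence Q1 A B f = PH (LL f)"
proof -
  have "PH (LL f) = (\<Sum>e\<in>Q1. fscale (f e) (PH (unitv (B e)) - PH (unitv (A e))))"
    unfolding B_macro_def
    by (simp add: fsp.linear_sum[OF PH_lin] fsp.linear_scale[OF PH_lin] fsp.linear_diff[OF PH_lin])
  also have "\<dots> = tensor_incidence Q1 A B f"
    unfolding tensor_incidence_def by (rule sum.cong) (auto simp: PH_unitv AB_in_V)
  finally show ?thesis by simp
qed


lemma R_V: "(u, v) \<in> RR \<Longrightarrow> u \<in> VV \<Longrightarrow> v \<in> VV"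
  by (induction rule: rtrancl_induct) (auto simp: AB_in_V)

lemma R_sym: "(u, v) \<in> RR \<Longrightarrow> (v, u) \<in> RR"
proof -
  have "sym EE" by (auto simp: sym_def)
  then have "sym RR" by (rule sym_rtrancl)
  then show "(u, v) \<in> RR \<Longrightarrow> (v, u) \<in> RR" by (auto simp: sym_def)
qed

lemma class_eq: "(u, v) \<in> RR \<Longrightarrow> RR``{u} = RR``{v}"
proof -
  assume uv: "(u, v) \<in> RR"
  then have vu: "(v, u) \<in> RR" by (rule R_sym)
  show ?thesis
  proof (intro set_eqI iffI)
    fix x assume "x \<in> RR``{u}"
    then have "(u, x) \<in> RR" by simp
    then have "(v, x) \<in> RR" by (rule rtrancl_trans[OF vu])
    then show "x \<in> RR``{v}" by simp
  next
    fix x assume "x \<in> RR``{v}"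
    then have "(v, x) \<in> RR" by simp
    then have "(u, x) \<in> RR" by (rule rtrancl_trans[OF uv])
    then show "x \<in> RR``{u}" by simp
  qed
qed

lemma quot_eq: "VV // RR = (\<lambda>w. RR``{w}) ` VV"
  by (auto simp: quotient_def)

lemma class_sub: "u \<in> VV \<Longrightarrow> RR``{u} \<subseteq> VV"
proof
  fix x assume u: "u \<in> VV" and "x \<in> RR``{u}"
  then have "(u, x) \<in> RR" by simp
  then show "x \<in> VV" using R_V u by blast
qed

abbreviation SM :: "(('v list \<Rightarrow> 'a) \<Rightarrow> 'a) \<Rightarrow> (('v list \<Rightarrow> 'a) set \<Rightarrow> 'a)" where
  "SM g \<equiv> (\<lambda>C. if C \<in> VV // RR then (\<Sum>w\<in>C. g w) else 0)"

lemma SM_lin: "Vector_Spaces.linear fscale fscale SM"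
  by (rule linear_fsI) (auto simp: fun_eq_iff sum.distrib sum_distrib_left)

lemma SM_unitv: "w \<in> VV \<Longrightarrow> SM (unitv w) = unitv (RR``{w})"
proof (rule ext)
  fix C assume w: "w \<in> VV"
  show "SM (unitv w) C = unitv (RR``{w}) C"
  proof (cases "C \<in> VV // RR")
    case True
    then obtain u where u: "u \<in> VV" "C = RR``{u}" unfolding quotient_def by blast
    have finC: "finite C" using finite_subset[OF class_sub[OF u(1)] finV] u(2) by simp
    have iff: "w \<in> C \<longleftrightarrow> C = RR``{w}"
    proof
      assume "w \<in> C"
      then have "(u, w) \<in> RR" using u(2) by simp
      then show "C = RR``{w}" using u(2) class_eq[of u w] by simp
    next
      assume "C = RR``{w}"
      then show "w \<in> C" by simp
    qed
    have s1: "SM (unitv w) C = (\<Sum>x\<in>C. unitv w x)" using True by (simp only: if_True)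
    have "(\<Sum>x\<in>C. unitv w x) = (\<Sum>x\<in>C. if x = w then (1::'a) else 0)"
      by (simp add: unitv_app)
    also have "\<dots> = (if w \<in> C then 1 else 0)" using finC by simp
    finally have s2: "(\<Sum>x\<in>C. unitv w x) = (if w \<in> C then (1::'a) else 0)" .
    have s3: "unitv (RR``{w}) C = (if C = RR``{w} then (1::'a) else 0)" by (simp only: unitv_app)
    show ?thesis using True by (simp only: if_True s2 s3 iff)
  next
    case False
    have "RR``{w} \<in> VV // RR" by (rule quotientI[OF w])
    then have "C \<noteq> RR``{w}" using False by metis
    then show ?thesis using False by (simp only: unitv_app if_False)
  qed
qed

lemma img_sub: "fs.subspace (LL ` fspace Q1)"
  by (rule fsp.linear_subspace_image[OF LL_lin fspace_subspace])

lemma unitv_in: "e \<in> Q1 \<Longrightarrow> unitv e \<in> fspace Q1"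
  by (auto simp: fspace_def unitv_def)

lemma path_in: "(u, v) \<in> RR \<Longrightarrow> unitv v - unitv u \<in> LL ` fspace Q1"
proof (induction rule: rtrancl_induct)
  case base
  have "unitv u - unitv u = (0 :: ('v list \<Rightarrow> 'a) \<Rightarrow> 'a)" by (rule diff_self)
  then show ?case using fs.subspace_0[OF img_sub] by metis
next
  case (step y z)
  have yz: "unitv z - unitv y \<in> LL ` fspace Q1"
  proof -
    from step(2) consider (f) e where "e \<in> Q1" "y = A e" "z = B e"
      | (b) e where "e \<in> Q1" "y = B e" "z = A e" by blast
    then show ?thesis
    proof cases
      case f
      have L: "LL (unitv e) \<in> LL ` fspace Q1" using unitv_in[OF f(1)] by (rule imageI)
      have eq: "unitv z - unitv y = LL (unitv e)" using f LL_unitv[OF f(1)] by simp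
      show ?thesis by (subst eq) (rule L)
    next
      case b
      have L: "LL (unitv e) \<in> LL ` fspace Q1" using unitv_in[OF b(1)] by (rule imageI)
      have eq: "unitv z - unitv y = - LL (unitv e)" using b LL_unitv[OF b(1)] by simp
      show ?thesis by (subst eq) (rule fs.subspace_neg[OF img_sub L])
    qed
  qed
  have "(unitv z - unitv y) + (unitv y - unitv u) \<in> LL ` fspace Q1"
    by (rule fs.subspace_add[OF img_sub yz step(3)])
  moreover have "(unitv z - unitv y) + (unitv y - unitv u) = unitv z - unitv u"
    by (metis diff_add_cancel add_diff_eq)
  ultimately show ?case by metis
qed

lemma SM_LL: "SM (LL f) = 0"
proof -
  have "SM (LL f) = (\<Sum>e\<in>Q1. fscale (f e) (SM (unitv (B e)) - SM (unitv (A e))))"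
    unfolding B_macro_def
    by (simp only: fsp.linear_sum[OF SM_lin] fsp.linear_scale[OF SM_lin] fsp.linear_diff[OF SM_lin] o_def)
  also have "\<dots> = 0"
  proof (rule sum.neutral, rule ballI)
    fix e assume e: "e \<in> Q1"
    have "(A e, B e) \<in> RR" using e by blast
    then have "RR``{A e} = RR``{B e}" by (rule class_eq)
    note eq = this
    have "SM (unitv (B e)) = unitv (RR``{B e})" by (rule SM_unitv[OF AB_in_V(2)[OF e]])
    also have "\<dots> = unitv (RR``{A e})" using eq by simp
    also have "\<dots> = SM (unitv (A e))" by (rule SM_unitv[OF AB_in_V(1)[OF e], symmetric])
    finally have "SM (unitv (B e)) = SM (unitv (A e))" .
    then show "fscale (f e) (SM (unitv (B e)) - SM (unitv (A e))) = 0"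
      by (simp add: fscale_def zero_fun_def)
  qed
  finally show ?thesis .
qed


lemma LL_image: "LL ` fspace Q1 = {g \<in> fspace VV. SM g = 0}"
proof (rule antisym)
  show "LL ` fspace Q1 \<subseteq> {g \<in> fspace VV. SM g = 0}"
    using LL_fspace SM_LL by blast
  show "{g \<in> fspace VV. SM g = 0} \<subseteq> LL ` fspace Q1"
  proof
    fix g assume "g \<in> {g \<in> fspace VV. SM g = 0}"
    then have g: "g \<in> fspace VV" "SM g = 0" by auto
    define r where "r w = (SOME x. x \<in> RR``{w})" for w
    have r_in: "(w, r w) \<in> RR" for w
    proof -
      have "w \<in> RR``{w}" by simp
      then have "r w \<in> RR``{w}" unfolding r_def by (rule someI[of "\<lambda>x. x \<in> RR``{w}"])
      then show ?thesis by simp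
    qed
    define P1 where "P1 = (\<Sum>w\<in>VV. fscale (g w) (unitv w - unitv (r w)))"
    define P2 where "P2 = (\<Sum>w\<in>VV. fscale (g w) (unitv (r w)))"
    have "g = (\<Sum>w\<in>VV. fscale (g w) (unitv w))" by (rule fspace_expand[OF finV g(1)])
    also have "\<dots> = P1 + P2"
      unfolding P1_def P2_def sum.distrib[symmetric]
    proof (rule sum.cong[OF refl])
      fix w
      show "fscale (g w) (unitv w) = fscale (g w) (unitv w - unitv (r w)) + fscale (g w) (unitv (r w))"
        by (simp add: fs.scale_right_diff_distrib)
    qed
    finally have gP: "g = P1 + P2" .
    have P1: "P1 \<in> LL ` fspace Q1"
      unfolding P1_def
    proof (rule fs.subspace_sum[OF img_sub])
      fix w
      have "unitv (r w) - unitv w \<in> LL ` fspace Q1" by (rule path_in[OF r_in])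
      then have "- (unitv (r w) - unitv w) \<in> LL ` fspace Q1" by (rule fs.subspace_neg[OF img_sub])
      then have "unitv w - unitv (r w) \<in> LL ` fspace Q1" by simp
      then show "fscale (g w) (unitv w - unitv (r w)) \<in> LL ` fspace Q1"
        by (rule fs.subspace_scale[OF img_sub])
    qed
    have P2: "P2 = 0"
    proof (rule ext)
      fix x
      have "P2 x = (\<Sum>w\<in>VV. if x = r w then g w else 0)"
        unfolding P2_def sum_fun_app by (rule sum.cong) (auto simp: unitv_app)
      also have "\<dots> = (\<Sum>w\<in>{w\<in>VV. x = r w}. g w)"
        using finV by (simp add: sum.inter_filter)
      also have "\<dots> = 0"
      proof (cases "\<exists>w0\<in>VV. r w0 = x")
        case True
        then obtain w0 where w0: "w0 \<in> VV" "r w0 = x" by blast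
        have seteq: "{w\<in>VV. x = r w} = RR``{w0}"
        proof (intro set_eqI iffI)
          fix w assume "w \<in> {w\<in>VV. x = r w}"
          then have w: "w \<in> VV" "x = r w" by auto
          have "(w, x) \<in> RR" using r_in[of w] w(2) by simp
          moreover have "(w0, x) \<in> RR" using r_in[of w0] w0(2) by simp
          ultimately have "(w0, w) \<in> RR" using rtrancl_trans[OF _ R_sym] by blast
          then show "w \<in> RR``{w0}" by simp
        next
          fix w assume "w \<in> RR``{w0}"
          then have "(w0, w) \<in> RR" by simp
          then have "RR``{w0} = RR``{w}" by (rule class_eq)
          then have "r w = r w0" unfolding r_def by simp
          moreover have "w \<in> VV" using class_sub[OF w0(1)] \<open>w \<in> RR``{w0}\<close> by blast
          ultimately show "w \<in> {w\<in>VV. x = r w}" using w0(2) by simp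
        qed
        have inq: "RR``{w0} \<in> VV // RR" by (rule quotientI[OF w0(1)])
        have "(\<Sum>w\<in>RR``{w0}. g w) = 0" using fun_cong[OF g(2), of "RR``{w0}"] inq by simp
        then show ?thesis using seteq by simp
      next
        case False
        then have "{w\<in>VV. x = r w} = {}" by auto
        then show ?thesis by (simp only: sum.empty)
      qed
      finally show "P2 x = 0 x" by simp
    qed
    show "g \<in> LL ` fspace Q1" using gP P1 P2 by simp
  qed
qed

lemma dim_image_LL: "fs.dim (LL ` fspace Q1) + c_macro Q1 A B = card VV"
proof -
  have sp: "(fspace VV :: (('v list \<Rightarrow> 'a) \<Rightarrow> 'a) set) \<subseteq> fs.span (unitv ` VV)"
    by (rule equalityD2[OF span_unitv[OF finV]])
  have fU: "finite (unitv ` VV :: (('v list \<Rightarrow> 'a) \<Rightarrow> 'a) set)" using finV by simp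
  note RN = fsp.rank_nullity_sub[OF SM_lin fspace_subspace fU sp]
  have finQ: "finite (VV // RR)" using quot_eq finV by simp
  have "SM ` fspace VV = SM ` fs.span (unitv ` VV)" by (simp only: span_unitv[OF finV])
  also have "\<dots> = fs.span (SM ` unitv ` VV)"
    by (rule fsp.linear_span_image[OF SM_lin, symmetric])
  also have "SM ` unitv ` VV = unitv ` (VV // RR)"
  proof -
    have "SM ` unitv ` VV = (\<lambda>w. SM (unitv w)) ` VV" by (simp add: image_image)
    also have "\<dots> = (\<lambda>w. unitv (RR``{w})) ` VV" by (rule image_cong[OF refl SM_unitv])
    also have "\<dots> = unitv ` ((\<lambda>w. RR``{w}) ` VV)" by (simp add: image_image)
    finally show ?thesis using quot_eq by simp
  qed
  also have "fs.span (unitv ` (VV // RR)) = fspace (VV // RR)" by (rule span_unitv[OF finQ])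
  finally have "fs.dim (SM ` fspace VV) = card (VV // RR)" using dim_fspace[OF finQ] by simp
  moreover have d1: "fs.dim (fspace VV :: ((('v list \<Rightarrow> 'a) \<Rightarrow> 'a) set)) = card VV"
    by (rule dim_fspace[OF finV])
  moreover have "fs.dim (LL ` fspace Q1) = fs.dim {g \<in> fspace VV. SM g = 0}"
    by (simp only: LL_image)
  ultimately show ?thesis using RN unfolding c_macro_def by linarith
qed


lemma main_ctx:
  "int (fdim (cycle_space Q1 A B)) =
     int (card Q1) - int (card VV) + int (c_macro Q1 A B) + int (defect Q1 A B)"
proof -
  define Z where "Z = fspace Q1 \<inter> {f. PH (LL f) = 0}"
  have Zeq: "cycle_space Q1 A B = Z"
    unfolding Z_def by (auto simp: cycle_space_def incidence_eq)
  have lin: "Vector_Spaces.linear fscale fscale (PH \<circ> LL)"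
    by (rule Vector_Spaces.linear_compose[OF LL_lin PH_lin])
  have "fs.subspace {f. (PH \<circ> LL) f = 0}"
    by (rule fsp.linear_subspace_kernel[OF lin])
  then have Zsub: "fs.subspace Z"
    unfolding Z_def by (intro fs.subspace_inter[OF fspace_subspace]) (simp add: o_def)
  have fU: "finite (unitv ` Q1 :: ('e \<Rightarrow> 'a) set)" using finQ1 by simp
  have spE: "(fspace Q1 :: ('e \<Rightarrow> 'a) set) \<subseteq> fs.span (unitv ` Q1)"
    by (rule equalityD2[OF span_unitv[OF finQ1]])
  have spZ: "Z \<subseteq> fs.span (unitv ` Q1)" using spE unfolding Z_def by blast
  note RN1 = fsp.rank_nullity_sub[OF LL_lin Zsub fU spZ]
  note RN2 = fsp.rank_nullity_sub[OF LL_lin fspace_subspace fU spE]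
  have img: "LL ` Z = LL ` fspace Q1 \<inter> {g \<in> fspace VV. PH g = 0}"
    unfolding Z_def using LL_fspace by auto
  have ph0: "PH 0 = 0" by (rule fsp.linear_0[OF PH_lin])
  have ker: "{f \<in> Z. LL f = 0} = {f \<in> fspace Q1. LL f = 0}"
    unfolding Z_def using ph0 by auto
  have dimE: "fs.dim (fspace Q1 :: ('e \<Rightarrow> 'a) set) = card Q1" by (rule dim_fspace[OF finQ1])
  have def: "defect Q1 A B = fs.dim (LL ` fspace Q1 \<inter> {g \<in> fspace VV. PH g = 0})"
    by (simp add: defect_def fdim_fs)
  have fz: "fdim (cycle_space Q1 A B) = fs.dim Z" by (simp add: fdim_fs Zeq)
  have e1: "fs.dim Z = defect Q1 A B + fs.dim {f \<in> fspace Q1. LL f = 0}"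
    using RN1 img ker def by simp
  have e2: "card Q1 = fs.dim (LL ` fspace Q1) + fs.dim {f \<in> fspace Q1. LL f = 0}"
    using RN2 dimE by simp
  have e3: "fs.dim (LL ` fspace Q1) + c_macro Q1 A B = card VV" by (rule dim_image_LL)
  have i1: "int (fs.dim Z) = int (defect Q1 A B) + int (fs.dim {f \<in> fspace Q1. LL f = 0})"
    using e1 by simp
  have i2: "int (card Q1) = int (fs.dim (LL ` fspace Q1)) + int (fs.dim {f \<in> fspace Q1. LL f = 0})"
    using e2 by simp
  have i3: "int (fs.dim (LL ` fspace Q1)) + int (c_macro Q1 A B) = int (card VV)"
    using e3 by simp
  show ?thesis unfolding fz using i1 i2 i3 by linarith
qed

end

theorem theorem3p14:
  fixes Q0 :: "'v set" and Q1 :: "'e set"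
    and A B :: "'e \<Rightarrow> 'v list \<Rightarrow> 'a::field"
  assumes "tensor_hypergraph Q0 Q1 A B"
  shows "int (fdim (cycle_space Q1 A B)) =
           int (card Q1) - int (card (V_macro Q1 A B)) + int (c_macro Q1 A B)
           + int (defect Q1 A B)"
proof -
  have "finite Q1" using assms by (simp add: tensor_hypergraph_def)
  then show ?thesis by (rule main_ctx)
qed

end
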